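(* Let $z\in\mathbb{C}^n$ have unit-modulus entries, let $W\in\mathbb{C}^{n\times n}$ be Hermitian and $z$-discordant (i.e., $\|W\|_{\mathrm{op}} \leq 3\sqrt{n}$ and $\|Wz\|_\infty \leq 3\sqrt{n\log n}$), and let $C = zz^* + \sigma W$. Let $x\in\mathbb{C}^n$ satisfy $\|x\|_2^2 = n$ and $z^*Cz \leq x^*Cx$ (e.g., $x$ a global optimizer of $\max x^*Cx$ subject to $|x_1|=\cdots=|x_n|=1$), with global phase chosen so that $z^*x = |z^*x|$. The $\ell_2$ error bound $\|x-z\|_2 \leq 12\sigma$ (obtained by expanding $z^*Cz \leq x^*Cx$, dividing $n^2-|z^*x|^2 \leq \sigma(x^*Wx - z^*Wz)$ by $n+|z^*x| \geq n$, and using $x^*Wx - z^*Wz \leq \|x-z\|_2\|W\|_{\mathrm{op}}\|x+z\|_2$) can be bootstrapped to reduce the constant: assuming $\|x-z\|_2 \leq \alpha\sigma$ and $\sigma \leq t\sqrt{n}$, one obtains $\|x-z\|_2 \leq \alpha_k\sigma$ for all $k$, with $\alpha_0 = 12$ and $\alpha_{k+1} = 6 + (t/2)^2\alpha_k^3$. For $t < 1/(6\sqrt{2})$ small enough, $\alpha_k$ converges arbitrarily close to $6$. For example, if $\sigma \leq \sqrt{n}/12$, then $\|x-z\|_2 \leq 6.5\sigma$.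
   Context: Angular synchronization: measurements $C = zz^*+\sigma W$ of relative phases; the maximum likelihood estimator solves $\max_{x} x^*Cx$ subject to $|x_i|=1$ for all $i$. The basic bound $\|x-z\|_2\leq 12\sigma$ is pessimistic because it uses $n+|z^*x|\geq n$ although $n+|z^*x|$ is closer to $2n$. *)

theory Defs
  imports "HOL-Analysis.Analysis"
begin

text \<open>Vectors in C^n are modelled as complex^'n, matrices as complex^'n^'n.
  The norm on complex^'n is the Euclidean (l2) norm.\<close>

definition cdot :: "complex^'n \<Rightarrow> complex^'n \<Rightarrow> complex" where
  "cdot u v = (\<Sum>i\<in>UNIV. cnj (u$i) * v$i)"

definition qform :: "complex^'n^'n \<Rightarrow> complex^'n \<Rightarrow> complex" where
  "qform A v = cdot v (A *v v)"

definition hermitian_mat :: "complex^'n^'n \<Rightarrow> bool" where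
  "hermitian_mat A \<longleftrightarrow> (\<forall>i j. A$i$j = cnj (A$j$i))"

definition op_norm :: "complex^'n^'n \<Rightarrow> real" where
  "op_norm A = onorm (\<lambda>v. A *v v)"

definition sup_norm :: "complex^'n \<Rightarrow> real" where
  "sup_norm v = Max (range (\<lambda>i. cmod (v$i)))"

definition outer :: "complex^'n \<Rightarrow> complex^'n \<Rightarrow> complex^'n^'n" where
  "outer u v = (\<chi> i j. u$i * cnj (v$j))"

definition discordant :: "complex^'n \<Rightarrow> complex^'n^'n \<Rightarrow> bool" where
  "discordant z W \<longleftrightarrow>
     op_norm W \<le> 3 * sqrt (real CARD('n)) \<and>
     sup_norm (W *v z) \<le> 3 * sqrt (real CARD('n) * ln (real CARD('n)))"

fun alpha_seq :: "real \<Rightarrow> nat \<Rightarrow> real" where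
  "alpha_seq t 0 = 12"
| "alpha_seq t (Suc k) = 6 + (t/2)^2 * (alpha_seq t k)^3"

end

theory Submission
  imports Defs
begin

lemma inner_cdot: "inner u v = Re (cdot u v)"
  by (simp add: inner_vec_def cdot_def inner_complex_def)

lemma smv: "((r::real) *\<^sub>R A) *v v = r *\<^sub>R (A *v (v::complex^'n))"
  by (simp add: vec_eq_iff matrix_vector_mult_def scaleR_sum_right)

lemma cdot_self: "cdot v v = of_real ((norm v)^2)"
proof -
  have "(norm v)^2 = inner v v" by (simp add: power2_norm_eq_inner)
  hence "Re (cdot v v) = (norm v)^2" by (simp add: inner_cdot)
  moreover have "Im (cdot v v) = 0" by (simp add: cdot_def Im_sum)
  ultimately show ?thesis by (simp add: complex_eq_iff)
qed

lemma norm_unit: fixes z :: "complex^'n" assumes "\<forall>i. cmod (z$i) = 1" shows "(norm z)^2 = real CARD('n)"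
  using assms by (simp add: norm_vec_def L2_set_def)

lemma qform_outer: "qform (outer z z) v = cnj (cdot z v) * cdot z v"
proof -
  have 1: "outer z z *v v = (\<chi> i. z$i * cdot z v)"
    by (simp add: vec_eq_iff matrix_vector_mult_def outer_def cdot_def sum_distrib_left mult_ac)
  have "qform (outer z z) v = (\<Sum>i\<in>UNIV. cnj (v$i) * z$i) * cdot z v"
    unfolding qform_def 1 cdot_def[of v] by (simp add: sum_distrib_left sum_distrib_right mult_ac)
  moreover have "(\<Sum>i\<in>UNIV. cnj (v$i) * z$i) = cnj (cdot z v)"
    by (simp add: cdot_def mult_ac)
  ultimately show ?thesis by simp
qed

lemma qform_add: "qform (A + r *\<^sub>R B) v = qform A v + of_real r * qform B v"
proof -
  have "(A + r *\<^sub>R B) *v v = A *v v + r *\<^sub>R (B *v v)"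
    by (simp add: matrix_vector_mult_add_rdistrib smv)
  thus ?thesis
    by (simp add: qform_def cdot_def sum.distrib distrib_left sum_distrib_left scaleR_conv_of_real[where 'a=complex] mult_ac)
qed

lemma herm_swap: assumes "hermitian_mat W" shows "cdot x (W *v z) = cnj (cdot z (W *v x))"
proof -
  have "cdot x (W *v z) = (\<Sum>i\<in>UNIV. \<Sum>j\<in>UNIV. cnj (x$i) * W$i$j * z$j)"
    by (simp add: cdot_def matrix_vector_mult_def sum_distrib_left mult_ac)
  also have "... = (\<Sum>j\<in>UNIV. \<Sum>i\<in>UNIV. cnj (x$i) * W$i$j * z$j)" by (rule sum.swap)
  also have "... = (\<Sum>j\<in>UNIV. \<Sum>i\<in>UNIV. cnj (cnj (z$j) * W$j$i * x$i))"
  proof (intro sum.cong refl)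
    fix j i
    have "W$i$j = cnj (W$j$i)" using assms unfolding hermitian_mat_def by blast
    thus "cnj (x$i) * W$i$j * z$j = cnj (cnj (z$j) * W$j$i * x$i)" by (simp add: mult_ac)
  qed
  also have "... = cnj (\<Sum>j\<in>UNIV. \<Sum>i\<in>UNIV. cnj (z$j) * W$j$i * x$i)"
    by (simp add: cnj_sum)
  also have "... = cnj (cdot z (W *v x))"
    by (simp add: cdot_def matrix_vector_mult_def sum_distrib_left mult_ac)
  finally show ?thesis .
qed


lemma alpha_nonneg: "t \<ge> 0 \<Longrightarrow> alpha_seq t k \<ge> 0"
  by (induction k) auto

lemma alpha_step_bound:
  assumes "alpha_seq t k \<le> b" "t \<ge> 0"
  shows "alpha_seq t (Suc k) \<le> 6 + (t/2)^2 * b^3"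
proof -
  have "alpha_seq t k ^ 3 \<le> b^3" using assms alpha_nonneg by (intro power_mono) auto
  thus ?thesis by (simp add: mult_left_mono)
qed

lemma alpha_twelfth: "alpha_seq (1/12) 5 \<le> 6.5"
proof -
  have a0: "alpha_seq (1/12) 0 \<le> 12" by simp
  have a1: "alpha_seq (1/12) 1 \<le> 9" using alpha_step_bound[OF a0] by (simp add: numeral_eq_Suc)
  have a2: "alpha_seq (1/12) 2 \<le> 7.27" using alpha_step_bound[OF a1] by (simp add: numeral_eq_Suc)
  have a3: "alpha_seq (1/12) 3 \<le> 6.67" using alpha_step_bound[OF a2] by (simp add: numeral_eq_Suc)
  have a4: "alpha_seq (1/12) 4 \<le> 6.52" using alpha_step_bound[OF a3] by (simp add: numeral_eq_Suc)
  show ?thesis using alpha_step_bound[OF a4] by (simp add: numeral_eq_Suc)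
qed

lemma key_real:
  fixes n d \<sigma> :: real
  assumes n: "n > 0" and d: "d \<ge> 0" and s: "\<sigma> \<ge> 0" and dn: "d^2 \<le> 2*n"
    and K: "d^2 * n - d^4/4 \<le> 6 * \<sigma> * n * d"
  shows "d \<le> 12 * \<sigma>" and "d \<le> 6 * \<sigma> + d^3 / (4*n)"
proof -
  have K2: "d * n - d^3/4 \<le> 6 * \<sigma> * n"
  proof (cases "d = 0")
    case True thus ?thesis using s n by simp
  next
    case False
    hence dp: "d > 0" using d by simp
    have "d * (d * n - d^3/4) \<le> d * (6 * \<sigma> * n)" using K by (simp add: algebra_simps power2_eq_square power3_eq_cube power4_eq_xxxx)
    thus ?thesis using dp by simp
  qed
  have "d^3/4 \<le> d * n / 2"
  proof -
    have "d^3 = d * d^2" by (simp add: power3_eq_cube power2_eq_square)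
    also have "\<dots> \<le> d * (2*n)" using dn d by (intro mult_left_mono) auto
    finally show ?thesis by simp
  qed
  with K2 have "d * n / 2 \<le> 6 * \<sigma> * n" by linarith
  hence "(d - 12 * \<sigma>) * n \<le> 0" by (simp add: algebra_simps)
  thus "d \<le> 12 * \<sigma>" using n by (simp add: mult_le_0_iff)
  from K2 have "(d - 6 * \<sigma> - d^3/(4*n)) * n \<le> 0" using n by (simp add: algebra_simps)
  thus "d \<le> 6 * \<sigma> + d^3 / (4*n)" using n by (simp add: mult_le_0_iff)
qed

theorem mainTheorem8:
  fixes z x :: "complex^'n" and W :: "complex^'n^'n" and \<sigma> :: real
  assumes unit: "\<forall>i. cmod (z$i) = 1"
    and herm: "hermitian_mat W"
    and disc: "discordant z W"
    and sig: "\<sigma> \<ge> 0"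
    and xnorm: "(norm x)^2 = real CARD('n)"
    and opt: "Re (qform (outer z z + \<sigma> *\<^sub>R W) z) \<le> Re (qform (outer z z + \<sigma> *\<^sub>R W) x)"
    and phase: "cdot z x = complex_of_real (cmod (cdot z x))"
  shows "(\<forall>t k. 0 \<le> t \<longrightarrow> \<sigma> \<le> t * sqrt (real CARD('n)) \<longrightarrow>
              norm (x - z) \<le> alpha_seq t k * \<sigma>)
       \<and> (\<forall>\<epsilon>>0. \<exists>t0>0. \<forall>t. 0 \<le> t \<and> t < t0 \<longrightarrow> (\<exists>k. alpha_seq t k \<le> 6 + \<epsilon>))
       \<and> (\<sigma> \<le> sqrt (real CARD('n)) / 12 \<longrightarrow> norm (x - z) \<le> 6.5 * \<sigma>)"
proof -
  define n where "n = real CARD('n)"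
  have npos: "n > 0" by (simp add: n_def)
  have nz: "(norm z)^2 = n" using norm_unit[OF unit] n_def by simp
  have nx: "(norm x)^2 = n" using xnorm n_def by simp
  define p where "p = cmod (cdot z x)"
  have p0: "p \<ge> 0" by (simp add: p_def)
  have cp: "cdot z x = of_real p" using phase p_def by simp
  have izx: "inner z x = p" using cp by (simp add: inner_cdot)
  define d where "d = norm (x - z)"
  have d0: "d \<ge> 0" by (simp add: d_def)
  have d2: "d^2 = 2*n - 2*p"
  proof -
    have "d^2 = inner x x - 2 * inner z x + inner z z"
      unfolding d_def power2_norm_eq_inner by (simp add: inner_diff_left inner_diff_right inner_commute)
    thus ?thesis using izx nz nx by (simp add: power2_norm_eq_inner)
  qed
  have dn: "d^2 \<le> 2*n" using d2 p0 by simp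
  have sx: "norm x = sqrt n" using nx by (metis norm_ge_zero real_sqrt_unique)
  have sz: "norm z = sqrt n" using nz by (metis norm_ge_zero real_sqrt_unique)
  have snorm: "norm (x + z) \<le> 2 * sqrt n" using norm_triangle_ineq[of x z] sx sz by simp
  have opW: "op_norm W \<le> 3 * sqrt n" using disc by (simp add: discordant_def n_def)
  have Wb: "norm (W *v (x + z)) \<le> op_norm W * norm (x + z)"
    unfolding op_norm_def by (rule onorm) simp
  have Wb2: "norm (W *v (x + z)) \<le> 6 * n"
  proof -
    have "op_norm W * norm (x + z) \<le> (3 * sqrt n) * (2 * sqrt n)"
      using opW snorm by (intro mult_mono) (auto simp: op_norm_def onorm_pos_le npos less_imp_le)
    also have "\<dots> = 6 * n" using npos by simp
    finally show ?thesis using Wb by simp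
  qed
  have diffW: "Re (qform W x) - Re (qform W z) = inner (x - z) (W *v (x + z))"
  proof -
    have "inner x (W *v z) = inner z (W *v x)"
      using herm_swap[OF herm, of x z] by (simp add: inner_cdot)
    thus ?thesis
      by (simp add: qform_def inner_cdot[symmetric] matrix_vector_right_distrib inner_diff_left inner_add_right)
  qed
  have CS: "inner (x - z) (W *v (x + z)) \<le> d * (6 * n)"
  proof -
    have "inner (x - z) (W *v (x + z)) \<le> d * norm (W *v (x + z))"
      unfolding d_def by (rule norm_cauchy_schwarz)
    also have "\<dots> \<le> d * (6 * n)" using Wb2 d0 by (rule mult_left_mono)
    finally show ?thesis .
  qed
  have czz: "cdot z z = of_real n" using cdot_self[of z] nz by simp
  have optr: "n^2 + \<sigma> * Re (qform W z) \<le> p^2 + \<sigma> * Re (qform W x)"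
    using opt by (simp add: qform_add qform_outer czz cp power2_eq_square)
  have "n^2 - p^2 \<le> \<sigma> * (Re (qform W x) - Re (qform W z))"
    using optr by (simp add: algebra_simps)
  also have "\<dots> \<le> \<sigma> * (d * (6 * n))" using CS diffW sig by (simp add: mult_left_mono)
  finally have K0: "n^2 - p^2 \<le> \<sigma> * (d * (6 * n))" .
  have pe: "p = n - d^2/2" using d2 by linarith
  have K: "d^2 * n - d^4/4 \<le> 6 * \<sigma> * n * d"
    using K0 unfolding pe by (simp add: algebra_simps power2_eq_square power4_eq_xxxx)
  note kr = key_real[OF npos d0 sig dn K]
  have P1: "\<forall>t k. 0 \<le> t \<longrightarrow> \<sigma> \<le> t * sqrt (real CARD('n)) \<longrightarrow> norm (x - z) \<le> alpha_seq t k * \<sigma>"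
  proof (intro allI impI)
    fix t k assume t0: "0 \<le> t" and st: "\<sigma> \<le> t * sqrt (real CARD('n))"
    have st2: "\<sigma>^2 \<le> t^2 * n"
    proof -
      have "\<sigma>^2 \<le> (t * sqrt n)^2" using st sig n_def by (intro power_mono) auto
      thus ?thesis using npos by (simp add: power_mult_distrib)
    qed
    show "norm (x - z) \<le> alpha_seq t k * \<sigma>"
      unfolding d_def[symmetric]
    proof (induction k)
      case 0 thus ?case using kr(1) by simp
    next
      case (Suc k)
      let ?a = "alpha_seq t k"
      have a0: "?a \<ge> 0" using alpha_nonneg t0 by simp
      have "d^3 \<le> (?a * \<sigma>)^3" using Suc d0 by (intro power_mono) auto
      hence "d^3/(4*n) \<le> ?a^3 * \<sigma> * \<sigma>^2 / (4*n)" using npos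
        by (simp add: divide_right_mono power_mult_distrib power3_eq_cube power2_eq_square mult_ac)
      also have "\<dots> \<le> ?a^3 * \<sigma> * (t^2 * n) / (4*n)" using st2 a0 sig npos
        by (intro divide_right_mono mult_left_mono) auto
      also have "\<dots> = (t/2)^2 * ?a^3 * \<sigma>" using npos by (simp add: power_divide field_simps)
      finally have "d \<le> 6 * \<sigma> + (t/2)^2 * ?a^3 * \<sigma>" using kr(2) by linarith
      thus ?case by (simp add: algebra_simps)
    qed
  qed
  have P2: "\<forall>\<epsilon>>0. \<exists>t0>0. \<forall>t. 0 \<le> t \<and> t < t0 \<longrightarrow> (\<exists>k. alpha_seq t k \<le> 6 + \<epsilon>)"
  proof (intro allI impI)
    fix e :: real assume e: "e > 0"
    show "\<exists>t0>0. \<forall>t. 0 \<le> t \<and> t < t0 \<longrightarrow> (\<exists>k. alpha_seq t k \<le> 6 + e)"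
    proof (intro exI[of _ "sqrt (e/432)"] conjI allI impI)
      show "sqrt (e/432) > 0" using e by simp
      fix t assume "0 \<le> t \<and> t < sqrt (e/432)"
      hence "t^2 \<le> (sqrt (e/432))^2" by (intro power_mono) auto
      hence "t^2 \<le> e/432" using e by simp
      hence "alpha_seq t 1 \<le> 6 + e" by (simp add: power_divide)
      thus "\<exists>k. alpha_seq t k \<le> 6 + e" by blast
    qed
  qed
  have P3: "\<sigma> \<le> sqrt (real CARD('n)) / 12 \<longrightarrow> norm (x - z) \<le> 6.5 * \<sigma>"
  proof
    assume "\<sigma> \<le> sqrt (real CARD('n)) / 12"
    hence "norm (x - z) \<le> alpha_seq (1/12) 5 * \<sigma>" using P1 by auto
    also have "\<dots> \<le> 6.5 * \<sigma>" using alpha_twelfth sig by (rule mult_right_mono)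
    finally show "norm (x - z) \<le> 6.5 * \<sigma>" .
  qed
  show ?thesis using P1 P2 P3 by blast
qed

end
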